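(* Let $n\ge1$ and $1\le p\le 2n$. Then $v_p>0$.
   Context: $k$ is a field of characteristic zero, $\mathcal O_n=k[x]/(x^{n+1})$, elements of $\mathcal O_n$ identified with multiplication operators, $\operatorname{ad}_x(\delta)=x\delta-\delta x$. The order filtration is $\mathcal D^p(\mathcal O_n)=\{\delta\in\operatorname{End}_k(\mathcal O_n):[f_0,[f_1,\dots,[f_p,\delta]\dots]]=0\ \forall f_i\in\mathcal O_n\}$. For $\delta\in\mathcal D^p(\mathcal O_n)$, $\operatorname{ad}_x^p(\delta)$ is multiplication by an element of $\mathcal O_n$ and $\operatorname{ad}_x^p:\mathcal D^p(\mathcal O_n)\to\mathcal O_n$ is $\mathcal O_n$-linear, so its image is an ideal $(x^{v_p})$ of $\mathcal O_n$; $v_p\in\{0,\dots,n\}$ denotes the corresponding exponent. *)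

theory Defs
  imports "HOL-Computational_Algebra.Polynomial"
begin

text \<open>O_n = k[x]/(x^(n+1)) is modelled as the set of polynomials of degree \<le> n,
  with multiplication followed by reduction modulo x^(n+1).\<close>

definition On :: "nat \<Rightarrow> 'a::field poly set" where
  "On n = {f. degree f \<le> n}"

definition mulO :: "nat \<Rightarrow> 'a::field poly \<Rightarrow> 'a poly \<Rightarrow> 'a poly" where
  "mulO n f g = (f * g) mod monom 1 (Suc n)"

text \<open>k-linear endomorphisms of O_n (taken to be 0 outside O_n, for extensionality).\<close>
definition EndO :: "nat \<Rightarrow> ('a::field poly \<Rightarrow> 'a poly) set" where
  "EndO n = {d. (\<forall>g\<in>On n. d g \<in> On n)
              \<and> (\<forall>f\<in>On n. \<forall>g\<in>On n. d (f + g) = d f + d g)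
              \<and> (\<forall>c. \<forall>f\<in>On n. d (smult c f) = smult c (d f))
              \<and> (\<forall>g. g \<notin> On n \<longrightarrow> d g = 0)}"

definition multop :: "nat \<Rightarrow> 'a::field poly \<Rightarrow> 'a poly \<Rightarrow> 'a poly" where
  "multop n f = (\<lambda>g. if g \<in> On n then mulO n f g else 0)"

definition commO :: "nat \<Rightarrow> 'a::field poly \<Rightarrow> ('a poly \<Rightarrow> 'a poly) \<Rightarrow> ('a poly \<Rightarrow> 'a poly)" where
  "commO n f d = (\<lambda>g. if g \<in> On n then mulO n f (d g) - d (mulO n f g) else 0)"

definition Dord :: "nat \<Rightarrow> nat \<Rightarrow> ('a::field poly \<Rightarrow> 'a poly) set" where
  "Dord n p = {d \<in> EndO n. \<forall>fs. length fs = Suc p \<longrightarrow> set fs \<subseteq> On n \<longrightarrow>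
                   foldr (commO n) fs d = (\<lambda>_. 0)}"

definition adx :: "nat \<Rightarrow> ('a::field poly \<Rightarrow> 'a poly) \<Rightarrow> ('a poly \<Rightarrow> 'a poly)" where
  "adx n = commO n [:0, 1:]"

definition adx_image :: "nat \<Rightarrow> nat \<Rightarrow> 'a::field poly set" where
  "adx_image n p = {f \<in> On n. \<exists>d \<in> Dord n p. (adx n ^^ p) d = multop n f}"

definition xideal :: "nat \<Rightarrow> nat \<Rightarrow> 'a::field poly set" where
  "xideal n v = {mulO n (monom 1 v) g | g. g \<in> On n}"

definition vp :: "'a::field itself \<Rightarrow> nat \<Rightarrow> nat \<Rightarrow> nat" where
  "vp _ n p = (LEAST v. (adx_image n p :: 'a poly set) = xideal n v)"

end

theory Submission
  imports Defs "HOL-Computational_Algebra.Computational_Algebra"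
begin

lemma deg_m: "degree (monom (1::'a::field) (Suc n)) = Suc n"
  by (simp add: degree_monom_eq)

lemma m_nz: "monom (1::'a::field) (Suc n) \<noteq> 0"
  by simp

lemma mod_On: "(f::'a::field poly) \<in> On n \<Longrightarrow> f mod monom 1 (Suc n) = f"
  unfolding On_def by (intro mod_poly_less) (simp add: deg_m)

lemma mulO_On: "mulO n (a::'a::field poly) b \<in> On n"
proof -
  have "b' mod monom (1::'a) (Suc n) = 0 \<or> degree (b' mod monom 1 (Suc n)) < Suc n" for b'
    using degree_mod_less[OF m_nz, of b' n] by (simp add: deg_m)
  then show ?thesis unfolding On_def mulO_def by (metis degree_0 less_Suc_eq_le mem_Collect_eq zero_le)
qed

lemma zero_On: "0 \<in> On n" unfolding On_def by simp
lemma one_On: "1 \<in> On n" unfolding On_def by simp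
lemma diff_On: "a \<in> On n \<Longrightarrow> b \<in> On n \<Longrightarrow> a - b \<in> On n"
  unfolding On_def using degree_diff_le by auto

lemma mulO_0[simp]: "mulO n a 0 = 0" "mulO n 0 a = 0" unfolding mulO_def by simp_all

lemma mulO_assoc: "mulO n a (mulO n b c) = mulO n (a * b) c"
  unfolding mulO_def by (metis mod_mult_right_eq mult.assoc)

lemma mulO_comm: "mulO n a b = mulO n b a"
  unfolding mulO_def by (simp add: mult.commute)

lemma mulO_add: "mulO n a (b + c) = mulO n a b + mulO n a c"
  unfolding mulO_def by (simp add: distrib_left poly_mod_add_left)

lemma mulO_smult: "mulO n a (smult c b) = smult c (mulO n a b)"
  unfolding mulO_def by (simp add: mod_smult_left)

lemma mulO_one: "g \<in> On n \<Longrightarrow> mulO n 1 g = g"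
  unfolding mulO_def by (simp add: mod_On)

definition good :: "nat \<Rightarrow> ('a::field poly \<Rightarrow> 'a poly) \<Rightarrow> bool" where
  "good n d \<longleftrightarrow> (\<forall>g\<in>On n. d g \<in> On n) \<and> d 0 = 0"

lemma good_commO: "good n d \<Longrightarrow> good n (commO n f d)"
  unfolding good_def commO_def by (auto intro!: diff_On mulO_On zero_On)

lemma good_funpow: "good n d \<Longrightarrow> good n ((adx n ^^ k) d)"
  by (induction k) (auto simp: adx_def good_commO)

lemma EndO_zero: "d \<in> EndO n \<Longrightarrow> d 0 = 0"
proof -
  assume "d \<in> EndO n"
  then have "d (0 + 0) = d 0 + d 0" unfolding EndO_def using zero_On by blast
  then show ?thesis by (metis add_cancel_left_right add_0)
qed

lemma EndO_good: "d \<in> EndO n \<Longrightarrow> good n d"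
  unfolding good_def using EndO_zero unfolding EndO_def by blast

lemma no_unit:
  fixes Y :: "'a::field_char_0 poly \<Rightarrow> 'a poly"
  assumes Y: "good n Y"
    and H: "\<forall>g\<in>On n. mulO n [:0,1:] (Y g) - Y (mulO n [:0,1:] g) = g"
  shows False
proof -
  have x: "[:0,1:] = (monom 1 1 :: 'a poly)" by (simp add: monom_Suc)
  have x': "monom 1 (Suc 0) = ([:0,1:] :: 'a poly)" by (simp add: monom_Suc)
  have claim: "g \<in> On n \<Longrightarrow> mulO n (monom 1 (Suc k)) (Y g) - Y (mulO n (monom 1 (Suc k)) g)
      = smult (of_nat (Suc k)) (mulO n (monom 1 k) g)" for g k
  proof (induction k)
    case 0
    then show ?case using H by (simp add: x' mulO_one)
  next
    case (Suc k)
    define a where "a = mulO n (monom 1 (Suc k)) g"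
    have aO: "a \<in> On n" unfolding a_def by (rule mulO_On)
    have Ha: "mulO n [:0,1:] (Y a) - Y (mulO n [:0,1:] a) = a" using H aO by blast
    have IH: "mulO n (monom 1 (Suc k)) (Y g) = Y a + smult (of_nat (Suc k)) (mulO n (monom 1 k) g)"
      using Suc unfolding a_def by (simp add: algebra_simps)
    have e1: "mulO n [:0,1:] (mulO n (monom 1 (Suc k)) (Y g)) = mulO n (monom 1 (Suc (Suc k))) (Y g)"
      by (simp add: mulO_assoc x mult_monom)
    have e2: "mulO n [:0,1:] a = mulO n (monom 1 (Suc (Suc k))) g"
      unfolding a_def by (simp add: mulO_assoc x mult_monom)
    have e3: "mulO n [:0,1:] (mulO n (monom 1 k) g) = a"
      unfolding a_def by (simp add: mulO_assoc x mult_monom)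
    have "mulO n (monom 1 (Suc (Suc k))) (Y g) = mulO n [:0,1:] (Y a) + smult (of_nat (Suc k)) a"
      using arg_cong[OF IH, of "mulO n [:0,1:]"] e1 e3 by (simp add: mulO_add mulO_smult)
    also have "\<dots> = Y (mulO n (monom 1 (Suc (Suc k))) g) + a + smult (of_nat (Suc k)) a"
      using Ha e2 by (simp add: algebra_simps)
    finally have fin: "mulO n (monom 1 (Suc (Suc k))) (Y g) = Y (mulO n (monom 1 (Suc (Suc k))) g) + a + smult (of_nat (Suc k)) a" .
    have s: "smult (of_nat (Suc (Suc k))) a = a + smult (of_nat (Suc k)) a"
      by (metis of_nat_Suc smult_add_left smult_1_left)
    show ?case using fin s unfolding a_def[symmetric] by (simp add: algebra_simps)
  qed
  have "mulO n (monom 1 (Suc n)) (Y 1) - Y (mulO n (monom 1 (Suc n)) 1)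
      = smult (of_nat (Suc n)) (mulO n (monom 1 n) 1)" using claim[OF one_On] .
  moreover have "mulO n (monom 1 (Suc n)) h = 0" for h :: "'a poly"
    unfolding mulO_def by simp
  moreover have "mulO n (monom 1 n) 1 = (monom 1 n :: 'a poly)"
    unfolding mulO_def by (simp add: mod_poly_less degree_monom_eq)
  ultimately have "smult (of_nat (Suc n)) (monom 1 n :: 'a poly) = 0"
    using Y unfolding good_def by simp
  then have "coeff (smult (of_nat (Suc n)) (monom 1 n :: 'a poly)) n = 0" by simp
  then have "(1::'a) + of_nat n = 0" by simp
  moreover have "(of_nat (Suc n) :: 'a) \<noteq> 0" by (rule of_nat_neq_0)
  moreover have "(of_nat (Suc n) :: 'a) = 1 + of_nat n" by (rule of_nat_Suc)
  ultimately show False by argo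
qed

lemma one_notin: 
  assumes "1 \<le> p"
  shows "(1::'a::field_char_0 poly) \<notin> adx_image n p"
proof
  assume "(1::'a poly) \<in> adx_image n p"
  then have "\<exists>d\<in>Dord n p. (adx n ^^ p) d = multop n (1::'a poly)" unfolding adx_image_def by simp
  then obtain d :: "'a poly \<Rightarrow> 'a poly" where d: "d \<in> Dord n p" "(adx n ^^ p) d = multop n 1"
    by blast
  define Y where "Y = (adx n ^^ (p - 1)) d"
  have gd: "good n d" using d(1) EndO_good unfolding Dord_def by blast
  have Yg: "good n Y" unfolding Y_def by (rule good_funpow[OF gd])
  have "(adx n ^^ p) d = adx n Y"
  proof -
    have "p = Suc (p - 1)" using assms by simp
    then have "(adx n ^^ p) d = (adx n ^^ Suc (p - 1)) d" by simp
    then show ?thesis unfolding Y_def by simp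
  qed
  then have "adx n Y = multop n 1" using d(2) by simp
  then have "\<forall>g\<in>On n. mulO n [:0,1:] (Y g) - Y (mulO n [:0,1:] g) = g"
  proof (intro ballI)
    fix g :: "'a poly" assume g: "g \<in> On n"
    have "adx n Y g = multop n 1 g" using \<open>adx n Y = multop n 1\<close> by simp
    then show "mulO n [:0,1:] (Y g) - Y (mulO n [:0,1:] g) = g"
      using g unfolding adx_def commO_def multop_def by (simp add: mulO_one)
  qed
  with Yg show False by (rule no_unit)
qed


lemma add_On: "a \<in> On n \<Longrightarrow> b \<in> On n \<Longrightarrow> a + b \<in> On n"
  unfolding On_def using degree_add_le by auto

lemma smult_On: "a \<in> On n \<Longrightarrow> smult c a \<in> On n"
  unfolding On_def using degree_smult_le order_trans by blast

lemma commO_zero_fun: "commO n f (\<lambda>_. 0) = (\<lambda>_. 0)"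
  unfolding commO_def by auto

lemma zero_in: "(0::'a::field poly) \<in> adx_image n p"
proof -
  have E: "(\<lambda>_. 0::'a poly) \<in> EndO n" unfolding EndO_def using zero_On by auto
  have F: "foldr (commO n) fs (\<lambda>_. 0::'a poly) = (\<lambda>_. 0)" for fs
    by (induction fs) (simp_all add: commO_zero_fun)
  have P: "(adx n ^^ k) (\<lambda>_. 0::'a poly) = (\<lambda>_. 0)" for k
    by (induction k) (simp_all add: adx_def commO_zero_fun)
  have M: "multop n (0::'a poly) = (\<lambda>_. 0)" unfolding multop_def by auto
  show ?thesis unfolding adx_image_def Dord_def using E F P M zero_On by fastforce
qed

lemma commO_at0: "d 0 = 0 \<Longrightarrow> commO n f d 0 = 0"
  unfolding commO_def using zero_On by simp

lemma mulO_swap: "mulO n h (mulO n f g) = mulO n f (mulO n h g)"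
  by (simp add: mulO_assoc mult.commute)

lemma comp_commO:
  assumes "d 0 = 0"
  shows "commO n f (\<lambda>g. d (multop n h g)) = (\<lambda>g. commO n f d (multop n h g))"
proof (rule ext)
  fix g
  show "commO n f (\<lambda>g. d (multop n h g)) g = commO n f d (multop n h g)"
  proof (cases "g \<in> On n")
    case True
    then show ?thesis unfolding commO_def multop_def
      by (simp add: mulO_swap mulO_On)
  next
    case False
    then show ?thesis unfolding multop_def using commO_at0[of d n f, OF assms]
      by (simp add: commO_def)
  qed
qed

lemma foldr_comp:
  assumes "d 0 = 0"
  shows "foldr (commO n) fs (\<lambda>g. d (multop n h g)) = (\<lambda>g. foldr (commO n) fs d (multop n h g))
     \<and> foldr (commO n) fs d 0 = 0"
proof (induction fs)
  case Nil
  then show ?case using assms by simp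
next
  case (Cons f fs)
  then show ?case using comp_commO[of "foldr (commO n) fs d" n f h] by (simp add: commO_at0)
qed

lemma funpow_comp:
  assumes "d 0 = 0"
  shows "(adx n ^^ k) (\<lambda>g. d (multop n h g)) = (\<lambda>g. (adx n ^^ k) d (multop n h g))
     \<and> (adx n ^^ k) d 0 = 0"
proof (induction k)
  case 0
  then show ?case using assms by simp
next
  case (Suc k)
  then show ?case using comp_commO[of "(adx n ^^ k) d" n _ h]
    by (simp add: adx_def commO_at0)
qed

lemma multop_comp: "multop n f (multop n h g) = multop n (mulO n h f) g"
  unfolding multop_def using mulO_On zero_On
  by (auto simp: mulO_def mod_mult_left_eq mod_mult_right_eq mult.commute mult.left_commute)

lemma mult_closed:
  assumes f: "f \<in> adx_image n p" and h: "h \<in> On n"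
  shows "mulO n h (f::'a::field poly) \<in> adx_image n p"
proof -
  obtain d where d: "d \<in> Dord n p" "(adx n ^^ p) d = multop n f"
    using f unfolding adx_image_def by blast
  have dE: "d \<in> EndO n" using d(1) unfolding Dord_def by blast
  have d0: "d 0 = 0" using EndO_zero[OF dE] .
  define d' where "d' = (\<lambda>g. d (multop n h g))"
  have mO: "multop n h g \<in> On n" for g
    unfolding multop_def using mulO_On zero_On by auto
  have madd: "multop n h (a + b) = multop n h a + multop n h b" if "a \<in> On n" "b \<in> On n" for a b
    using that add_On[OF that] unfolding multop_def by (simp add: mulO_add)
  have msm: "multop n h (smult c a) = smult c (multop n h a)" if "a \<in> On n" for a c
    using that smult_On[OF that] unfolding multop_def by (simp add: mulO_smult)
  have "d' \<in> EndO n"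
    unfolding EndO_def d'_def
  proof (intro CollectI conjI ballI allI impI)
    fix g :: "'a poly" assume "g \<in> On n" then show "d (multop n h g) \<in> On n"
      using dE mO unfolding EndO_def by blast
  next
    fix a b :: "'a poly" assume "a \<in> On n" "b \<in> On n"
    then show "d (multop n h (a + b)) = d (multop n h a) + d (multop n h b)"
      using madd dE mO unfolding EndO_def by auto
  next
    fix c :: 'a and a :: "'a poly" assume "a \<in> On n"
    then show "d (multop n h (smult c a)) = smult c (d (multop n h a))"
      using msm dE mO unfolding EndO_def by auto
  next
    fix g :: "'a poly" assume "g \<notin> On n"
    then show "d (multop n h g) = 0" unfolding multop_def using d0 by simp
  qed
  moreover have "foldr (commO n) fs d' = (\<lambda>_. 0)" if "length fs = Suc p" "set fs \<subseteq> On n" for fs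
    using foldr_comp[of d n fs h, OF d0] d(1) that unfolding Dord_def d'_def by auto
  ultimately have "d' \<in> Dord n p" unfolding Dord_def by blast
  moreover have "(adx n ^^ p) d' = multop n (mulO n h f)"
    using funpow_comp[where d=d and k=p and n=n and h=h, OF d0] d(2) unfolding d'_def by (auto simp: multop_comp)
  ultimately show ?thesis unfolding adx_image_def using mulO_On by blast
qed


lemma mod_in_On: "(a::'a::field poly) mod monom 1 (Suc n) \<in> On n"
  using mulO_On[of n 1 a] unfolding mulO_def by simp

lemma X_pow: "([:0,1:] ^ k :: 'a::field poly) = monom 1 k"
  by (simp add: monom_altdef)

lemma inv_exists: assumes q: "\<not> [:0,1:] dvd (q::'a::field poly)"
  shows "\<exists>u w. u * q + w * [:0,1:]^Suc n = 1"
proof -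
  define c where "c = coeff q 0"
  have c: "c \<noteq> 0" using q unfolding c_def
    by (metis dvd_iff_poly_eq_0 minus_zero poly_0_coeff_0)
  define r where "r = 1 - smult (1/c) q"
  have "poly r 0 = 0" unfolding r_def c_def using c unfolding c_def by (simp add: poly_0_coeff_0)
  then have "[:0,1:] dvd r" by (metis dvd_iff_poly_eq_0 minus_zero)
  then obtain s where s: "r = [:0,1:] * s" by (rule dvdE)
  have "smult (1/c) (\<Sum>i\<le>n. r^i) * q = (\<Sum>i\<le>n. r^i) * (1 - r)"
    unfolding r_def by (simp add: mult_smult_left mult_smult_right)
  also have "\<dots> = 1 - r ^ Suc n" by (simp add: sum_gp_basic mult.commute)
  also have "\<dots> = 1 - s^Suc n * [:0,1:]^Suc n" unfolding s by (simp only: power_mult_distrib mult.commute)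
  finally show ?thesis by (intro exI[of _ "smult (1/c) (\<Sum>i\<le>n. r^i)"] exI[of _ "s^Suc n"]) simp
qed
lemma ideal_form:
  fixes I :: "'a::field poly set"
  assumes sub: "I \<subseteq> On n" and z: "0 \<in> I" and mc: "\<forall>h\<in>On n. \<forall>f\<in>I. mulO n h f \<in> I"
  shows "\<exists>v. I = xideal n v"
proof (cases "I \<subseteq> {0}")
  case True
  have "xideal n (Suc n) = ({0} :: 'a poly set)"
    unfolding xideal_def mulO_def using zero_On by auto
  moreover have "I = {0}" using True z by auto
  ultimately show ?thesis by metis
next
  case False
  then obtain f0 where f0: "f0 \<in> I" "f0 \<noteq> 0" by blast
  define v where "v = (LEAST k. \<exists>f\<in>I. f \<noteq> 0 \<and> order 0 f = k)"
  have "\<exists>f\<in>I. f \<noteq> 0 \<and> order 0 f = v" unfolding v_def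
    by (rule LeastI[of _ "order 0 f0"]) (use f0 in blast)
  then obtain f where f: "f \<in> I" "f \<noteq> 0" "order 0 f = v" by blast
  have vle: "v \<le> order 0 f'" if "f' \<in> I" "f' \<noteq> 0" for f'
    unfolding v_def by (rule Least_le) (use that in blast)
  obtain q where q: "f = [:0,1:]^v * q" "\<not> [:0,1:] dvd q"
    using order_decomp[OF f(2), of 0] f(3) by auto
  obtain u w where bez: "u * q + w * [:0,1:]^Suc n = 1"
    using inv_exists[OF q(2)] by blast
  have vn: "v \<le> n" using order_degree[OF f(2), of 0] f(1,3) sub unfolding On_def by auto
  have "mulO n (u mod monom 1 (Suc n)) f = (u * f) mod monom 1 (Suc n)"
    unfolding mulO_def by (simp add: mod_mult_left_eq)
  also have "u * f = monom 1 v - (monom 1 v * w) * monom 1 (Suc n)"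
  proof -
    have "u * f = monom 1 v * (u * q)" using q(1) by (simp add: X_pow algebra_simps)
    also have "u * q = 1 - w * monom 1 (Suc n)" using bez unfolding X_pow by (simp only: eq_diff_eq)
    finally show ?thesis by (simp add: algebra_simps)
  qed
  also have "(monom 1 v - (monom 1 v * w) * monom 1 (Suc n)) mod monom 1 (Suc n) = (monom 1 v :: 'a poly)"
  proof -
    have "monom (1::'a) v \<in> On n" unfolding On_def using vn by (simp add: degree_monom_eq)
    then show ?thesis by (simp add: mod_On mod_diff_eq[symmetric])
  qed
  finally have xv0: "mulO n (u mod monom 1 (Suc n)) f = monom 1 v" .
  have "mulO n (u mod monom 1 (Suc n)) f \<in> I" using mc mod_in_On f(1) by blast
  then have xv: "monom 1 v \<in> I" using xv0 by simp
  show ?thesis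
  proof (intro exI[of _ v] set_eqI iffI)
    fix f' :: "'a poly" assume f': "f' \<in> I"
    show "f' \<in> xideal n v"
    proof (cases "f' = 0")
      case True
      then show ?thesis unfolding xideal_def using zero_On by force
    next
      case False
      have "[:0,1:]^order 0 f' dvd f'" using order_1[of 0 f'] by simp
      moreover have "([:0,1:]::'a poly)^v dvd [:0,1:]^order 0 f'"
        using vle[OF f' False] by (rule le_imp_power_dvd)
      ultimately have "[:0,1:]^v dvd f'" by (rule dvd_trans[rotated])
      then obtain g where "f' = [:0,1:]^v * g" by (rule dvdE)
      then have g: "f' = monom 1 v * g" by (simp add: X_pow)
      have "g \<noteq> 0" using g False by auto
      then have "degree f' = v + degree g" using g by (simp add: degree_mult_eq degree_monom_eq)
      then have "g \<in> On n" using f' sub unfolding On_def by auto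
      moreover have "mulO n (monom 1 v) g = f'"
        unfolding mulO_def g[symmetric] using f' sub by (simp add: mod_On subsetD)
      ultimately show ?thesis unfolding xideal_def by blast
    qed
  next
    fix f' :: "'a poly" assume "f' \<in> xideal n v"
    then obtain g where g: "g \<in> On n" "f' = mulO n (monom 1 v) g" unfolding xideal_def by blast
    then show "f' \<in> I" using mc xv by (simp add: mulO_comm)
  qed
qed

theorem lemma5:
  fixes n p :: nat
  assumes "1 \<le> n" and "1 \<le> p" and "p \<le> 2 * n"
  shows "0 < vp TYPE('a::field_char_0) n p"
proof -
  let ?I = "adx_image n p :: 'a poly set"
  have sub: "?I \<subseteq> On n" unfolding adx_image_def by blast
  have "\<exists>v. ?I = xideal n v"
    by (rule ideal_form[OF sub zero_in]) (use mult_closed in blast)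
  then obtain v0 where v0: "?I = xideal n v0" by blast
  have "(1::'a poly) \<in> xideal n 0"
  proof -
    have "mulO n (monom 1 0) 1 = (1::'a poly)" using mulO_one[OF one_On] by simp
    then show ?thesis unfolding xideal_def using one_On by force
  qed
  then have n0: "?I \<noteq> xideal n 0" using one_notin[OF assms(2)] by blast
  have "?I = xideal n (LEAST v. ?I = xideal n v)" by (rule LeastI[of _ v0]) (rule v0)
  then have "(LEAST v. ?I = xideal n v) \<noteq> 0" using n0 by auto
  then show ?thesis unfolding vp_def by simp
qed

end
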